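(* For all $n\in\mathbb N$ and all integers $d\geq 1$, $$\sum_{k=0}^nU_{d-1}\circ T_{(d+1)^k}\prod_{j=0}^k\frac{1}{U_d\circ T_{(d+1)^j}}=\frac{U_{(d+1)^{n+1}-2}}{U_{(d+1)^{n+1}-1}}$$ as rational fractions in $x$.
   Context: $T_n=T_n(x)$ and $U_n=U_n(x)$ denote the Chebyshev polynomials of the first and second kind, defined by $T_0=1$, $T_1=x$, $T_{n+1}=2xT_n-T_{n-1}$ and $U_0=1$, $U_1=2x$, $U_{n+1}=2xU_n-U_{n-1}$ for $n\geq1$. The symbol $\circ$ denotes composition of polynomials. *)

theory Defs
  imports "HOL-Computational_Algebra.Polynomial" "HOL-Computational_Algebra.Fraction_Field"
begin

fun chebT :: "nat \<Rightarrow> real poly" where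
  "chebT 0 = 1"
| "chebT (Suc 0) = [:0, 1:]"
| "chebT (Suc (Suc n)) = [:0, 2:] * chebT (Suc n) - chebT n"

fun chebU :: "nat \<Rightarrow> real poly" where
  "chebU 0 = 1"
| "chebU (Suc 0) = [:0, 2:]"
| "chebU (Suc (Suc n)) = [:0, 2:] * chebU (Suc n) - chebU n"

definition ratfun :: "real poly \<Rightarrow> real poly fract" where
  "ratfun p = Fract p 1"

end

theory Submission
  imports Defs
begin

lemma ratfun_mult: "ratfun (p * q) = ratfun p * ratfun q"
  by (simp add: ratfun_def)
lemma ratfun_add: "ratfun (p + q) = ratfun p + ratfun q"
  by (simp add: ratfun_def)
lemma ratfun_one: "ratfun 1 = 1"
  by (simp add: ratfun_def One_fract_def)
lemma ratfun_eq: "ratfun p = ratfun q \<longleftrightarrow> p = q"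
  by (simp add: ratfun_def eq_fract)
lemma ratfun_nz: "ratfun p = 0 \<longleftrightarrow> p = 0"
  by (simp add: ratfun_def Zero_fract_def eq_fract)

lemma cos_rec: "cos ((a::real) + t) = 2 * cos t * cos a - cos (a - t)"
  by (simp add: cos_add cos_diff)
lemma sin_rec: "sin ((a::real) + t) = 2 * cos t * sin a - sin (a - t)"
  by (simp add: sin_add sin_diff)

lemma chebT_cos: "poly (chebT n) (cos t) = cos (real n * t)"
proof (induction n rule: chebT.induct)
  case (3 n)
  have a: "real (Suc (Suc n)) * t = real (Suc n) * t + t"
    by (simp add: algebra_simps)
  have b: "real n * t = real (Suc n) * t - t"
    by (simp add: algebra_simps)
  show ?case using 3 unfolding a
    by (subst cos_rec) (simp only: b[symmetric] poly_diff poly_mult, simp)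
qed auto

lemma chebU_sin: "poly (chebU n) (cos t) * sin t = sin (real (Suc n) * t)"
proof (induction n rule: chebU.induct)
  case 1 then show ?case by simp
next
  case 2 then show ?case by (simp add: sin_double)
next
  case (3 n)
  have a: "sin (real (Suc (Suc (Suc n))) * t) = sin (real (Suc (Suc n)) * t + t)"
    by (simp add: algebra_simps)
  have b: "sin (real (Suc n) * t) = sin (real (Suc (Suc n)) * t - t)"
    by (simp add: algebra_simps)
  have "poly (chebU (Suc (Suc n))) (cos t) * sin t
     = 2 * cos t * (poly (chebU (Suc n)) (cos t) * sin t) - poly (chebU n) (cos t) * sin t"
    by (simp add: algebra_simps)
  also have "\<dots> = 2 * cos t * sin (real (Suc (Suc n)) * t) - sin (real (Suc n) * t)"
    using 3 by simp
  also have "\<dots> = sin (real (Suc (Suc (Suc n))) * t)"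
    unfolding a b by (rule sin_rec[symmetric])
  finally show ?case .
qed

lemma poly_eqI_interval:
  fixes p q :: "real poly"
  assumes "\<And>x. -1 < x \<Longrightarrow> x < 1 \<Longrightarrow> poly p x = poly q x"
  shows "p = q"
proof (rule ccontr)
  assume "p \<noteq> q"
  then have "finite {x. poly (p - q) x = 0}" by (intro poly_roots_finite) simp
  moreover have "{-1<..<1::real} \<subseteq> {x. poly (p - q) x = 0}" using assms by auto
  ultimately have "finite {-1<..<1::real}" by (rule finite_subset[rotated])
  then show False by (simp add: infinite_Ioo)
qed

lemma poly_eqI_cos:
  fixes p q :: "real poly"
  assumes "\<And>t. 0 < t \<Longrightarrow> t < pi \<Longrightarrow> poly p (cos t) = poly q (cos t)"
  shows "p = q"
proof (rule poly_eqI_interval)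
  fix x :: real assume x: "-1 < x" "x < 1"
  have "0 < arccos x \<and> arccos x < pi" using x by (intro arccos_lt_bounded) auto
  then have "poly p (cos (arccos x)) = poly q (cos (arccos x))" using assms by blast
  then show "poly p x = poly q x" using x by simp
qed

lemma sin_pos_0pi: "0 < t \<Longrightarrow> t < pi \<Longrightarrow> sin t \<noteq> 0"
  using sin_gt_zero by force

lemma idA:
  assumes "m \<ge> 1" "k \<ge> 1"
  shows "pcompose (chebU (m - 1)) (chebT k) * chebU (k - 1) = chebU (m * k - 1)"
proof (rule poly_eqI_cos)
  fix t :: real assume t: "0 < t" "t < pi"
  have s: "sin t \<noteq> 0" using sin_pos_0pi[OF t] .
  have "poly (pcompose (chebU (m - 1)) (chebT k) * chebU (k - 1)) (cos t) * sin t
      = poly (chebU (m - 1)) (cos (real k * t)) * sin (real k * t)"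
    using chebU_sin[of "k - 1" t] assms by (simp add: poly_pcompose chebT_cos of_nat_diff)
  also have "\<dots> = sin (real m * (real k * t))"
    using chebU_sin[of "m - 1" "real k * t"] assms by (simp add: of_nat_diff)
  also have "\<dots> = poly (chebU (m * k - 1)) (cos t) * sin t"
    using chebU_sin[of "m * k - 1" t] assms by (simp add: of_nat_diff mult.assoc)
  finally show "poly (pcompose (chebU (m - 1)) (chebT k) * chebU (k - 1)) (cos t)
      = poly (chebU (m * k - 1)) (cos t)" using s by simp
qed

lemma idB:
  assumes "N \<ge> 2" "M \<ge> N + 1"
  shows "chebU (M - 2) * chebU (N - 1) = chebU (N - 2) * chebU (M - 1) + chebU (M - N - 1)"
proof (rule poly_eqI_cos)
  fix t :: real assume t: "0 < t" "t < pi"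
  have s: "sin t \<noteq> 0" using sin_pos_0pi[OF t] .
  have e1: "poly (chebU (M - 2)) (cos t) * sin t = sin (real M * t - t)"
    using chebU_sin[of "M - 2" t] assms by (simp add: of_nat_diff algebra_simps)
  have e2: "poly (chebU (N - 2)) (cos t) * sin t = sin (real N * t - t)"
    using chebU_sin[of "N - 2" t] assms by (simp add: of_nat_diff algebra_simps)
  have e3: "poly (chebU (M - 1)) (cos t) * sin t = sin (real M * t)"
    using chebU_sin[of "M - 1" t] assms by (simp add: of_nat_diff algebra_simps)
  have e4: "poly (chebU (N - 1)) (cos t) * sin t = sin (real N * t)"
    using chebU_sin[of "N - 1" t] assms by (simp add: of_nat_diff algebra_simps)
  have e5: "poly (chebU (M - N - 1)) (cos t) * sin t = sin (real M * t - real N * t)"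
    using chebU_sin[of "M - N - 1" t] assms by (simp add: of_nat_diff algebra_simps)
  have "poly (chebU (M - 2) * chebU (N - 1)) (cos t) * (sin t * sin t)
      = poly (chebU (N - 2) * chebU (M - 1) + chebU (M - N - 1)) (cos t) * (sin t * sin t)"
  proof -
    have "poly (chebU (M - 2) * chebU (N - 1)) (cos t) * (sin t * sin t)
       = (poly (chebU (M - 2)) (cos t) * sin t) * (poly (chebU (N - 1)) (cos t) * sin t)"
      by (simp add: algebra_simps)
    also have "\<dots> = sin (real M * t - t) * sin (real N * t)" using e1 e4 by simp
    also have "\<dots> = sin (real N * t - t) * sin (real M * t) + sin (real M * t - real N * t) * sin t"
      by (simp add: sin_diff algebra_simps)
    also have "\<dots> = (poly (chebU (N - 2)) (cos t) * sin t) * (poly (chebU (M - 1)) (cos t) * sin t)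
        + (poly (chebU (M - N - 1)) (cos t) * sin t) * sin t"
      using e2 e3 e5 by simp
    also have "\<dots> = poly (chebU (N - 2) * chebU (M - 1) + chebU (M - N - 1)) (cos t) * (sin t * sin t)"
      by (simp add: algebra_simps)
    finally show ?thesis .
  qed
  then show "poly (chebU (M - 2) * chebU (N - 1)) (cos t)
      = poly (chebU (N - 2) * chebU (M - 1) + chebU (M - N - 1)) (cos t)" using s by simp
qed

lemma chebU_at1: "poly (chebU n) 1 = real n + 1"
  by (induction n rule: chebU.induct) auto

lemma chebU_nz: "chebU n \<noteq> 0"
  using chebU_at1[of n] by (metis add_cancel_right_left of_nat_0_le_iff poly_0 not_one_le_zero add_nonneg_pos zero_less_one less_irrefl)

lemma prod_lemma:
  assumes "d \<ge> 1"
  shows "(\<Prod>j=0..k. inverse (ratfun (pcompose (chebU d) (chebT ((d + 1) ^ j)))))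
     = inverse (ratfun (chebU ((d + 1) ^ (k + 1) - 1)))"
proof (induction k)
  case 0
  then show ?case by simp
next
  case (Suc k)
  define K where "K = (d + 1) ^ (k + 1)"
  have K1: "K \<ge> 1" unfolding K_def by (rule one_le_power) simp
  have A: "pcompose (chebU d) (chebT K) * chebU (K - 1) = chebU ((d + 1) * K - 1)"
    using idA[of "d + 1" K] K1 by simp
  have "(\<Prod>j=0..Suc k. inverse (ratfun (pcompose (chebU d) (chebT ((d + 1) ^ j)))))
      = inverse (ratfun (chebU (K - 1))) * inverse (ratfun (pcompose (chebU d) (chebT K)))"
    using Suc by (simp add: K_def)
  also have "\<dots> = inverse (ratfun (pcompose (chebU d) (chebT K) * chebU (K - 1)))"
    by (simp add: ratfun_mult mult.commute)
  also have "\<dots> = inverse (ratfun (chebU ((d + 1) ^ (Suc k + 1) - 1)))"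
    unfolding A by (simp add: K_def)
  finally show ?case .
qed

theorem theorem1p3:
  fixes n d :: nat
  assumes "d \<ge> 1"
  shows "(\<Sum>k=0..n. ratfun (pcompose (chebU (d - 1)) (chebT ((d + 1) ^ k)))
            * (\<Prod>j=0..k. inverse (ratfun (pcompose (chebU d) (chebT ((d + 1) ^ j))))))
         = ratfun (chebU ((d + 1) ^ (n + 1) - 2)) / ratfun (chebU ((d + 1) ^ (n + 1) - 1))"
proof (induction n)
  case 0
  have "d + 1 - 2 = d - 1" by simp
  then show ?case using assms by (simp add: divide_inverse)
next
  case (Suc n)
  define N where "N = (d + 1) ^ (n + 1)"
  define M where "M = (d + 1) * N"
  have "d + 1 \<le> (d + 1) ^ (n + 1)" by (rule self_le_power) simp_all
  then have N2: "N \<ge> 2" unfolding N_def using assms by simp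
  have MN: "M \<ge> N + 1" unfolding M_def using assms N2 by simp
  have B: "chebU (M - 2) * chebU (N - 1) = chebU (N - 2) * chebU (M - 1) + chebU (M - N - 1)"
    using idB[OF N2 MN] .
  have A: "pcompose (chebU (d - 1)) (chebT N) * chebU (N - 1) = chebU (d * N - 1)"
    using idA[of d N] assms N2 by simp
  have dN: "d * N - 1 = M - N - 1" unfolding M_def by (simp add: algebra_simps)
  have key: "ratfun (chebU (M - 2)) * ratfun (chebU (N - 1))
     = ratfun (chebU (N - 2)) * ratfun (chebU (M - 1))
       + ratfun (pcompose (chebU (d - 1)) (chebT N)) * ratfun (chebU (N - 1))"
    using B A dN by (simp add: ratfun_mult[symmetric] ratfun_add[symmetric])
  have nz1: "ratfun (chebU (N - 1)) \<noteq> 0" and nz2: "ratfun (chebU (M - 1)) \<noteq> 0"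
    by (simp_all add: ratfun_nz chebU_nz)
  have "(\<Sum>k=0..Suc n. ratfun (pcompose (chebU (d - 1)) (chebT ((d + 1) ^ k)))
            * (\<Prod>j=0..k. inverse (ratfun (pcompose (chebU d) (chebT ((d + 1) ^ j))))))
     = ratfun (chebU (N - 2)) / ratfun (chebU (N - 1))
       + ratfun (pcompose (chebU (d - 1)) (chebT N)) / ratfun (chebU (M - 1))"
    using Suc prod_lemma[OF assms, of "Suc n"]
    by (simp add: N_def M_def divide_inverse mult.commute)
  also have "\<dots> = ratfun (chebU (M - 2)) / ratfun (chebU (M - 1))"
    using nz1 nz2 key by (simp add: field_simps)
  finally show ?case by (simp add: M_def N_def mult.commute)
qed

end
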